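(* Let $(\mathbf{x}_i,y_i)$, $i=1,\dots,n$, be training samples with $\mathbf{x}_i\in\mathbb{R}^d$ and $y_i\in\{1,2\}$, let $\mathbf{x}^*_{i'}\in\mathbb{R}^d$, $i'=1,\dots,m$, be universum samples, and let $C,C^*>0$, $\Delta\ge 0$. Consider the two-class MU-SVM problem $$\min_{\mathbf{w}_1,\mathbf{w}_2,\boldsymbol\xi,\boldsymbol\zeta}\ \tfrac12(\|\mathbf{w}_1\|_2^2+\|\mathbf{w}_2\|_2^2)+C\sum_{i=1}^n\xi_i+C^*\sum_{i'=1}^m(\zeta_{i'1}+\zeta_{i'2})$$ subject to $(\mathbf{w}_{y_i}-\mathbf{w}_l)^\top\mathbf{x}_i\ge e_{il}-\xi_i$ with $e_{il}=1-\delta_{il}$ for $i=1,\dots,n$, $l=1,2$ (where $\delta_{il}=1$ if $y_i=l$ and $0$ otherwise), and $\big|\mathbf{w}_k^\top\mathbf{x}^*_{i'}-\max_{l=1,2}\mathbf{w}_l^\top\mathbf{x}^*_{i'}\big|\le\Delta+\zeta_{i'k}$, $\zeta_{i'k}\ge 0$ for $i'=1,\dots,m$, $k=1,2$. Then this problem reduces to the binary Universum-SVM (U-SVM) problem with zero bias: any optimal solution satisfies $\mathbf{w}_1=-\mathbf{w}_2$, and, relabeling class 1 as $+1$ and class 2 as $-1$ (labels $\tilde y_i\in\{+1,-1\}$), the vector $\mathbf{w}=\mathbf{w}_1-\mathbf{w}_2$ is an optimal solution of the U-SVM-type problem $$\min_{\mathbf{w},\boldsymbol\xi,\boldsymbol\zeta}\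 \tfrac14\|\mathbf{w}\|_2^2+C\sum_{i=1}^n\xi_i+C^*\sum_{i'=1}^m\zeta_{i'}\quad\text{s.t.}\quad \tilde y_i\,\mathbf{w}^\top\mathbf{x}_i\ge 1-\xi_i,\ \xi_i\ge0;\quad |\mathbf{w}^\top\mathbf{x}^*_{i'}|\le\Delta+\zeta_{i'},\ \zeta_{i'}\ge0,$$ i.e. the binary U-SVM with bias term $b=0$.
   Context: The Universum-SVM (U-SVM) of Weston et al. (2006) for binary labels $\tilde y_i\in\{\pm1\}$ minimizes a weighted sum of $\|\mathbf{w}\|^2$, hinge losses $\xi_i$ on the training constraints $\tilde y_i(\mathbf{w}^\top\mathbf{x}_i+b)\ge 1-\xi_i$, and $\epsilon$-insensitive losses $\zeta_{i'}$ on universum constraints $|\mathbf{w}^\top\mathbf{x}^*_{i'}+b|\le\Delta+\zeta_{i'}$; here $b=0$. *)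

theory Defs
  imports "HOL-Analysis.Analysis"
begin

text \<open>Samples are indexed 0-based: training samples x i, y i for i < n,
  universum samples xs j for j < m.  Class labels are 1 and 2.
  The MU-SVM weight vectors are W 1 and W 2 (W :: nat => vector, only W 1, W 2 matter);
  the universum slacks are zeta j k for j < m, k in {1,2}.\<close>

definition musvm_feasible ::
  "real \<Rightarrow> (nat \<Rightarrow> real^'d) \<Rightarrow> (nat \<Rightarrow> nat) \<Rightarrow> nat \<Rightarrow> (nat \<Rightarrow> real^'d) \<Rightarrow> nat
   \<Rightarrow> (nat \<Rightarrow> real^'d) \<Rightarrow> (nat \<Rightarrow> real) \<Rightarrow> (nat \<Rightarrow> nat \<Rightarrow> real) \<Rightarrow> bool" where
  "musvm_feasible \<Delta> x y n xs m W \<xi> \<zeta> \<longleftrightarrow>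
     (\<forall>i<n. \<forall>l\<in>{1,2}.
        (W (y i) - W l) \<bullet> x i \<ge> (1 - (if y i = l then 1 else 0)) - \<xi> i) \<and>
     (\<forall>j<m. \<forall>k\<in>{1,2}.
        \<bar>W k \<bullet> xs j - max (W 1 \<bullet> xs j) (W 2 \<bullet> xs j)\<bar> \<le> \<Delta> + \<zeta> j k \<and> \<zeta> j k \<ge> 0)"

definition musvm_obj ::
  "real \<Rightarrow> real \<Rightarrow> nat \<Rightarrow> nat \<Rightarrow> (nat \<Rightarrow> real^'d) \<Rightarrow> (nat \<Rightarrow> real) \<Rightarrow> (nat \<Rightarrow> nat \<Rightarrow> real) \<Rightarrow> real" where
  "musvm_obj C Cs n m W \<xi> \<zeta> =
     1/2 * ((norm (W 1))\<^sup>2 + (norm (W 2))\<^sup>2) + C * (\<Sum>i<n. \<xi> i)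
     + Cs * (\<Sum>j<m. \<zeta> j 1 + \<zeta> j 2)"

definition musvm_optimal ::
  "real \<Rightarrow> real \<Rightarrow> real \<Rightarrow> (nat \<Rightarrow> real^'d) \<Rightarrow> (nat \<Rightarrow> nat) \<Rightarrow> nat \<Rightarrow> (nat \<Rightarrow> real^'d) \<Rightarrow> nat
   \<Rightarrow> (nat \<Rightarrow> real^'d) \<Rightarrow> (nat \<Rightarrow> real) \<Rightarrow> (nat \<Rightarrow> nat \<Rightarrow> real) \<Rightarrow> bool" where
  "musvm_optimal C Cs \<Delta> x y n xs m W \<xi> \<zeta> \<longleftrightarrow>
     musvm_feasible \<Delta> x y n xs m W \<xi> \<zeta> \<and>
     (\<forall>W' \<xi>' \<zeta>'. musvm_feasible \<Delta> x y n xs m W' \<xi>' \<zeta>' \<longrightarrow>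
        musvm_obj C Cs n m W \<xi> \<zeta> \<le> musvm_obj C Cs n m W' \<xi>' \<zeta>')"

definition usvm_feasible ::
  "real \<Rightarrow> (nat \<Rightarrow> real^'d) \<Rightarrow> (nat \<Rightarrow> real) \<Rightarrow> nat \<Rightarrow> (nat \<Rightarrow> real^'d) \<Rightarrow> nat
   \<Rightarrow> real^'d \<Rightarrow> (nat \<Rightarrow> real) \<Rightarrow> (nat \<Rightarrow> real) \<Rightarrow> bool" where
  "usvm_feasible \<Delta> x yt n xs m w \<xi> \<zeta> \<longleftrightarrow>
     (\<forall>i<n. yt i * (w \<bullet> x i) \<ge> 1 - \<xi> i \<and> \<xi> i \<ge> 0) \<and>
     (\<forall>j<m. \<bar>w \<bullet> xs j\<bar> \<le> \<Delta> + \<zeta> j \<and> \<zeta> j \<ge> 0)"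

definition usvm_obj ::
  "real \<Rightarrow> real \<Rightarrow> nat \<Rightarrow> nat \<Rightarrow> real^'d \<Rightarrow> (nat \<Rightarrow> real) \<Rightarrow> (nat \<Rightarrow> real) \<Rightarrow> real" where
  "usvm_obj C Cs n m w \<xi> \<zeta> =
     1/4 * (norm w)\<^sup>2 + C * (\<Sum>i<n. \<xi> i) + Cs * (\<Sum>j<m. \<zeta> j)"

definition usvm_optimal ::
  "real \<Rightarrow> real \<Rightarrow> real \<Rightarrow> (nat \<Rightarrow> real^'d) \<Rightarrow> (nat \<Rightarrow> real) \<Rightarrow> nat \<Rightarrow> (nat \<Rightarrow> real^'d) \<Rightarrow> nat
   \<Rightarrow> real^'d \<Rightarrow> (nat \<Rightarrow> real) \<Rightarrow> (nat \<Rightarrow> real) \<Rightarrow> bool" where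
  "usvm_optimal C Cs \<Delta> x yt n xs m w \<xi> \<zeta> \<longleftrightarrow>
     usvm_feasible \<Delta> x yt n xs m w \<xi> \<zeta> \<and>
     (\<forall>w' \<xi>' \<zeta>'. usvm_feasible \<Delta> x yt n xs m w' \<xi>' \<zeta>' \<longrightarrow>
        usvm_obj C Cs n m w \<xi> \<zeta> \<le> usvm_obj C Cs n m w' \<xi>' \<zeta>')"

end

theory Submission
  imports Defs
begin

lemma uni_aux: "\<bar>(a::real) - max a b\<bar> = max 0 (b - a)"
  by (auto simp: max_def)

lemma uni_aux2: "\<bar>(b::real) - max a b\<bar> = max 0 (a - b)"
  by (auto simp: max_def)

lemma norm_id:
  fixes a b :: "real^'d"
  shows "(norm a)\<^sup>2 + (norm b)\<^sup>2 = (norm (a - b))\<^sup>2 / 2 + (norm (a + b))\<^sup>2 / 2"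
  by (simp add: power2_norm_eq_inner inner_add_left inner_add_right inner_diff_left
      inner_diff_right inner_commute[of b a] field_simps)

lemma half_feasible:
  fixes x xs :: "nat \<Rightarrow> real^'d" and y :: "nat \<Rightarrow> nat"
  assumes yv: "\<forall>i<n. y i \<in> {1, 2}" and D: "\<Delta> \<ge> 0"
    and tr: "\<forall>i<n. (y i = 1 \<longrightarrow> w \<bullet> x i \<ge> 1 - \<xi> i) \<and> (y i = 2 \<longrightarrow> - (w \<bullet> x i) \<ge> 1 - \<xi> i)
              \<and> \<xi> i \<ge> 0"
    and un1: "\<forall>j<m. max 0 (- (w \<bullet> xs j)) \<le> \<Delta> + \<zeta> j 1 \<and> \<zeta> j 1 \<ge> 0"
    and un2: "\<forall>j<m. max 0 (w \<bullet> xs j) \<le> \<Delta> + \<zeta> j 2 \<and> \<zeta> j 2 \<ge> 0"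
  shows "musvm_feasible \<Delta> x y n xs m (\<lambda>k::nat. if k = 1 then (1/2) *\<^sub>R w else - ((1/2) *\<^sub>R w)) \<xi> \<zeta>"
proof -
  have a: "\<forall>i<n. \<forall>l\<in>{1,2}.
        ((\<lambda>k::nat. if k = 1 then (1/2) *\<^sub>R w else - ((1/2) *\<^sub>R w)) (y i)
         - (\<lambda>k::nat. if k = 1 then (1/2) *\<^sub>R w else - ((1/2) *\<^sub>R w)) l) \<bullet> x i
        \<ge> (1 - (if y i = l then 1 else 0)) - \<xi> i"
  proof (intro allI impI ballI)
    fix i l assume i: "i < n" and l: "l \<in> {1::nat,2}"
    have "y i \<in> {1,2}" using yv i by auto
    then show "((\<lambda>k::nat. if k = 1 then (1/2) *\<^sub>R w else - ((1/2) *\<^sub>R w)) (y i)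
         - (\<lambda>k::nat. if k = 1 then (1/2) *\<^sub>R w else - ((1/2) *\<^sub>R w)) l) \<bullet> x i
        \<ge> (1 - (if y i = l then 1 else 0)) - \<xi> i"
      using l tr i by (auto simp: inner_diff_left inner_minus_left)
  qed
  have b: "\<forall>j<m. \<forall>k\<in>{1,2}.
        \<bar>(\<lambda>k::nat. if k = 1 then (1/2) *\<^sub>R w else - ((1/2) *\<^sub>R w)) k \<bullet> xs j
         - max ((\<lambda>k::nat. if k = 1 then (1/2) *\<^sub>R w else - ((1/2) *\<^sub>R w)) 1 \<bullet> xs j)
               ((\<lambda>k::nat. if k = 1 then (1/2) *\<^sub>R w else - ((1/2) *\<^sub>R w)) 2 \<bullet> xs j)\<bar>
        \<le> \<Delta> + \<zeta> j k \<and> \<zeta> j k \<ge> 0"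
  proof (intro allI impI ballI)
    fix j k assume j: "j < m" and k: "k \<in> {1::nat,2}"
    show "\<bar>(\<lambda>k::nat. if k = 1 then (1/2) *\<^sub>R w else - ((1/2) *\<^sub>R w)) k \<bullet> xs j
         - max ((\<lambda>k::nat. if k = 1 then (1/2) *\<^sub>R w else - ((1/2) *\<^sub>R w)) 1 \<bullet> xs j)
               ((\<lambda>k::nat. if k = 1 then (1/2) *\<^sub>R w else - ((1/2) *\<^sub>R w)) 2 \<bullet> xs j)\<bar>
        \<le> \<Delta> + \<zeta> j k \<and> \<zeta> j k \<ge> 0"
      using k un1 un2 j by (auto simp: inner_minus_left max_def abs_if split: if_splits)
  qed
  show ?thesis unfolding musvm_feasible_def using a b by blast
qed

theorem proposition1:
  fixes x xs :: "nat \<Rightarrow> real^'d" and y :: "nat \<Rightarrow> nat" and n m :: nat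
    and C Cs \<Delta> :: real
    and W :: "nat \<Rightarrow> real^'d" and \<xi> :: "nat \<Rightarrow> real" and \<zeta> :: "nat \<Rightarrow> nat \<Rightarrow> real"
  assumes "C > 0" and "Cs > 0" and "\<Delta> \<ge> 0"
    and "\<forall>i<n. y i \<in> {1, 2}"
    and "musvm_optimal C Cs \<Delta> x y n xs m W \<xi> \<zeta>"
  shows "W 1 = - W 2 \<and>
    (\<exists>\<xi>' \<zeta>'. usvm_optimal C Cs \<Delta> x (\<lambda>i. if y i = 1 then 1 else -1) n xs m
                (W 1 - W 2) \<xi>' \<zeta>')"
proof -
  note yv = assms(4)
  have feas: "musvm_feasible \<Delta> x y n xs m W \<xi> \<zeta>" and
    opt: "\<And>W' \<xi>' \<zeta>'. musvm_feasible \<Delta> x y n xs m W' \<xi>' \<zeta>' \<Longrightarrow>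
        musvm_obj C Cs n m W \<xi> \<zeta> \<le> musvm_obj C Cs n m W' \<xi>' \<zeta>'"
    using assms(5) unfolding musvm_optimal_def by auto
  define w where "w = W 1 - W 2"
  have tr: "\<forall>i<n. (y i = 1 \<longrightarrow> w \<bullet> x i \<ge> 1 - \<xi> i) \<and> (y i = 2 \<longrightarrow> - (w \<bullet> x i) \<ge> 1 - \<xi> i)
              \<and> \<xi> i \<ge> 0"
  proof (intro allI impI)
    fix i assume i: "i < n"
    have c: "\<forall>l\<in>{1,2}. (W (y i) - W l) \<bullet> x i \<ge> (1 - (if y i = l then 1 else 0)) - \<xi> i"
      using feas i unfolding musvm_feasible_def by blast
    have "y i \<in> {1,2}" using yv i by auto
    then show "(y i = 1 \<longrightarrow> w \<bullet> x i \<ge> 1 - \<xi> i) \<and> (y i = 2 \<longrightarrow> - (w \<bullet> x i) \<ge> 1 - \<xi> i)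
              \<and> \<xi> i \<ge> 0"
      using c by (auto simp: w_def inner_diff_left)
  qed
  have un: "\<forall>j<m. max 0 (- (w \<bullet> xs j)) \<le> \<Delta> + \<zeta> j 1 \<and> \<zeta> j 1 \<ge> 0 \<and>
                   max 0 (w \<bullet> xs j) \<le> \<Delta> + \<zeta> j 2 \<and> \<zeta> j 2 \<ge> 0"
  proof (intro allI impI)
    fix j assume j: "j < m"
    have c: "\<forall>k\<in>{1,2}. \<bar>W k \<bullet> xs j - max (W 1 \<bullet> xs j) (W 2 \<bullet> xs j)\<bar> \<le> \<Delta> + \<zeta> j k \<and> \<zeta> j k \<ge> 0"
      using feas j unfolding musvm_feasible_def by blast
    then show "max 0 (- (w \<bullet> xs j)) \<le> \<Delta> + \<zeta> j 1 \<and> \<zeta> j 1 \<ge> 0 \<and>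
                   max 0 (w \<bullet> xs j) \<le> \<Delta> + \<zeta> j 2 \<and> \<zeta> j 2 \<ge> 0"
      by (simp add: w_def inner_diff_left uni_aux uni_aux2)
  qed
  have f2: "musvm_feasible \<Delta> x y n xs m (\<lambda>k::nat. if k = 1 then (1/2) *\<^sub>R w else - ((1/2) *\<^sub>R w)) \<xi> \<zeta>"
    by (rule half_feasible[OF yv assms(3) tr]) (use un in auto)
  have nh: "(norm ((1/2) *\<^sub>R w))\<^sup>2 = (norm w)\<^sup>2 / 4" for w :: "real^'d"
    by (simp add: power2_eq_square)
  have "musvm_obj C Cs n m W \<xi> \<zeta> \<le> musvm_obj C Cs n m (\<lambda>k::nat. if k = 1 then (1/2) *\<^sub>R w else - ((1/2) *\<^sub>R w)) \<xi> \<zeta>"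
    by (rule opt[OF f2])
  then have "(norm (W 1))\<^sup>2 + (norm (W 2))\<^sup>2 \<le> (norm w)\<^sup>2 / 2"
    by (simp add: musvm_obj_def nh power_divide)
  then have "(norm (W 1 + W 2))\<^sup>2 \<le> 0" using norm_id[of "W 1" "W 2"] unfolding w_def by linarith
  then have s0: "W 1 + W 2 = 0" by simp
  then have P1: "W 1 = - W 2" by (simp add: eq_neg_iff_add_eq_0)
  have objW: "musvm_obj C Cs n m W \<xi> \<zeta> = usvm_obj C Cs n m w \<xi> (\<lambda>j. \<zeta> j 1 + \<zeta> j 2)"
    using norm_id[of "W 1" "W 2"] s0
    by (simp add: musvm_obj_def usvm_obj_def w_def)
  have uf: "usvm_feasible \<Delta> x (\<lambda>i. if y i = 1 then 1 else -1) n xs m w \<xi> (\<lambda>j. \<zeta> j 1 + \<zeta> j 2)"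
    unfolding usvm_feasible_def
  proof (rule conjI; intro allI impI)
    fix i assume i: "i < n"
    have "y i \<in> {1,2}" using yv i by auto
    then show "(if y i = 1 then 1 else -1) * (w \<bullet> x i) \<ge> 1 - \<xi> i \<and> \<xi> i \<ge> 0"
      using tr i by auto
  next
    fix j assume j: "j < m"
    then show "\<bar>w \<bullet> xs j\<bar> \<le> \<Delta> + (\<zeta> j 1 + \<zeta> j 2) \<and> 0 \<le> \<zeta> j 1 + \<zeta> j 2"
      using un by (auto simp: max_def abs_if split: if_splits)
  qed
  have uo: "usvm_obj C Cs n m w \<xi> (\<lambda>j. \<zeta> j 1 + \<zeta> j 2) \<le> usvm_obj C Cs n m w' \<xi>' \<zeta>'"
    if f': "usvm_feasible \<Delta> x (\<lambda>i. if y i = 1 then 1 else -1) n xs m w' \<xi>' \<zeta>'" for w' \<xi>' \<zeta>'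
  proof -
    define zm where "zm = (\<lambda>j k. if k = (1::nat) then (if w' \<bullet> xs j \<ge> 0 then 0 else \<zeta>' j)
                              else (if w' \<bullet> xs j \<ge> 0 then \<zeta>' j else 0))"
    have tr': "\<forall>i<n. (y i = 1 \<longrightarrow> w' \<bullet> x i \<ge> 1 - \<xi>' i) \<and> (y i = 2 \<longrightarrow> - (w' \<bullet> x i) \<ge> 1 - \<xi>' i)
              \<and> \<xi>' i \<ge> 0"
      using f' unfolding usvm_feasible_def by auto
    have u': "\<forall>j<m. \<bar>w' \<bullet> xs j\<bar> \<le> \<Delta> + \<zeta>' j \<and> \<zeta>' j \<ge> 0"
      using f' unfolding usvm_feasible_def by auto
    have fm: "musvm_feasible \<Delta> x y n xs m (\<lambda>k::nat. if k = 1 then (1/2) *\<^sub>R w' else - ((1/2) *\<^sub>R w')) \<xi>' zm"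
      by (rule half_feasible[OF yv assms(3) tr'])
         (use u' assms(3) in \<open>auto simp: zm_def max_def abs_if split: if_splits\<close>)
    have sz: "(\<Sum>j<m. zm j 1 + zm j 2) = (\<Sum>j<m. \<zeta>' j)"
      by (rule sum.cong) (auto simp: zm_def)
    have "usvm_obj C Cs n m w \<xi> (\<lambda>j. \<zeta> j 1 + \<zeta> j 2) = musvm_obj C Cs n m W \<xi> \<zeta>"
      using objW by simp
    also have "\<dots> \<le> musvm_obj C Cs n m (\<lambda>k::nat. if k = 1 then (1/2) *\<^sub>R w' else - ((1/2) *\<^sub>R w')) \<xi>' zm"
      by (rule opt[OF fm])
    also have "\<dots> = usvm_obj C Cs n m w' \<xi>' \<zeta>'"
      using sz by (simp add: musvm_obj_def usvm_obj_def nh power_divide)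
    finally show ?thesis .
  qed
  show ?thesis
    using P1 uf uo unfolding usvm_optimal_def w_def[symmetric] by blast
qed

end
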